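(* Let $\mathcal{M}=(W,R,V)$ be a Kripke model, $w_0\in W$, $\varphi_0$ a sentence of the modal $\mu$-calculus and $\Gamma$ an ordinal. Then every play of the $\Gamma$-bounded evaluation game $(\mathcal{M},w_0,\varphi_0,\Gamma)$ ends after finitely many rounds, i.e. reaches a position in which one of the players wins.
   Context: Formulae of the modal $\mu$-calculus over a set $\Phi$ of proposition symbols and a set $\Lambda$ of label symbols: $\varphi ::= p \mid \neg p \mid X \mid \varphi\vee\varphi \mid \varphi\wedge\varphi \mid \Diamond\varphi \mid \Box\varphi \mid \mu X\varphi \mid \nu X\varphi$ with $p\in\Phi$, $X\in\Lambda$. $\mathrm{Sub}(\varphi)$ is the set of nodes (occurrences) of the syntax tree of $\varphi$; $\mathrm{Sub}_{\mu\nu}(\varphi)$ is the set of those occurrences of the form $\mu X\psi$ or $\nu X\psi$. A label occurrence $X$ is free if it is not inside any subformula $\mu X\psi$ or $\nu X\psi$; a sentence has no free label occurrences. For an occurrence $X$ in a sentence $\varphi_0$, its reference formula $\mathrm{rf}(X)$ is the nearest ancestor of that occurrence in the syntax tree of the form $\mu X\psi$ or $\nu X\psi$ (same label $X$). A Kripke model is $\mathcal{M}=(W,R,V)$ with $W\neq\emptyset$, $R\subseteq W\times W$, $V:\Phi\to\mathcal{P}(W)$. The $\Gamma$-bounded evaluation game $(\mathcal{M},w_0,\varphi_0,\Gamma)$ is played by Eloise and Abelard. Positions are $(w,\varphi,c)$ with $w\in W$, $\varphi\in\mathrm{Sub}(\varphi_0)$ and $c:\mathrm{Sub}_{\mu\nu}(\varphi_0)\to\{\gamma\mid\gamma\le\Gamma\}$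 a clock mapping. The initial position is $(w_0,\varphi_0,c_0)$ with $c_0(\theta)=\Gamma$ for all $\theta$. Rules: at $(w,p,c)$ Eloise wins iff $w\in V(p)$, else Abelard wins; at $(w,\neg p,c)$ Eloise wins iff $w\notin V(p)$, else Abelard wins; at $(w,\psi\vee\theta,c)$ Eloise chooses the next position $(w,\psi,c)$ or $(w,\theta,c)$; at $(w,\psi\wedge\theta,c)$ Abelard chooses likewise; at $(w,\Diamond\psi,c)$ Eloise chooses $v$ with $wRv$ and play moves to $(v,\psi,c)$, and Abelard wins if no such $v$ exists; at $(w,\Box\psi,c)$ Abelard chooses $v$ with $wRv$ and play moves to $(v,\psi,c)$, and Eloise wins if no such $v$ exists; at $(w,\mu X\psi,c)$ Eloise chooses an ordinal $\gamma<\Gamma$ and play moves to $(w,\psi,c[\gamma/\mu X\psi])$ (where $c[\gamma/\theta]$ agrees with $c$ except that it sends $\theta$ to $\gamma$); at $(w,\nu X\psi,c)$ Abelard chooses $\gamma<\Gamma$ and play moves to $(w,\psi,c[\gamma/\nu X\psi])$. At $(w,X,c)$, let $\gamma=c(\mathrm{rf}(X))$. If $\mathrm{rf}(X)=\mu X\psi$: if $\gamma=0$ Abelard wins; otherwise Eloise chooses $\gamma'<\gamma$ and play moves to $(w,\psi,c')$ where $c'(\mu X\psi)=\gamma'$, $c'(\theta)=\Gamma$ for every $\theta\in\mathrm{Sub}_{\mu\nu}(\varphi_0)$ lying inside $\psi$, and $c'(\theta)=c(\theta)$ otherwise. If $\mathrm{rf}(X)=\nu X\psi$: the same with roles swapped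 (if $\gamma=0$ Eloise wins; otherwise Abelard chooses $\gamma'<\gamma$, with the same update of the clock mapping). Each application of a rule is one round. *)

theory Defs
  imports Main "HOL-Library.Sublist"
begin

datatype ('p, 'l) fml =
    Prop 'p
  | NProp 'p
  | Var 'l
  | Or "('p, 'l) fml" "('p, 'l) fml"
  | And "('p, 'l) fml" "('p, 'l) fml"
  | Dia "('p, 'l) fml"
  | Box "('p, 'l) fml"
  | Mu 'l "('p, 'l) fml"
  | Nu 'l "('p, 'l) fml"

text \<open>Occurrences (nodes of the syntax tree) are addressed by paths:
  0 = left / only child, 1 = right child.  subat phi pi is the subformula
  at node pi (None if pi is not a node).\<close>
fun subat :: "('p, 'l) fml \<Rightarrow> nat list \<Rightarrow> ('p, 'l) fml option" where
  "subat f [] = Some f"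
| "subat (Or a b) (i # pi) = (if i = 0 then subat a pi else if i = 1 then subat b pi else None)"
| "subat (And a b) (i # pi) = (if i = 0 then subat a pi else if i = 1 then subat b pi else None)"
| "subat (Dia a) (i # pi) = (if i = 0 then subat a pi else None)"
| "subat (Box a) (i # pi) = (if i = 0 then subat a pi else None)"
| "subat (Mu X a) (i # pi) = (if i = 0 then subat a pi else None)"
| "subat (Nu X a) (i # pi) = (if i = 0 then subat a pi else None)"
| "subat _ (_ # _) = None"

definition Sub :: "('p, 'l) fml \<Rightarrow> nat list set" where
  "Sub f = {pi. subat f pi \<noteq> None}"

definition binds :: "('p, 'l) fml \<Rightarrow> 'l \<Rightarrow> nat list \<Rightarrow> bool" where
  "binds f X pi \<longleftrightarrow> (\<exists>psi. subat f pi = Some (Mu X psi) \<or> subat f pi = Some (Nu X psi))"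

definition Sub_munu :: "('p, 'l) fml \<Rightarrow> nat list set" where
  "Sub_munu f = {pi. \<exists>X. binds f X pi}"

definition sentence :: "('p, 'l) fml \<Rightarrow> bool" where
  "sentence f \<longleftrightarrow> (\<forall>pi X. subat f pi = Some (Var X) \<longrightarrow>
      (\<exists>pi'. strict_prefix pi' pi \<and> binds f X pi'))"

definition is_rf :: "('p, 'l) fml \<Rightarrow> nat list \<Rightarrow> nat list \<Rightarrow> bool" where
  "is_rf f pi pi' \<longleftrightarrow> (\<exists>X. subat f pi = Some (Var X) \<and> strict_prefix pi' pi \<and> binds f X pi' \<and>
      (\<forall>pi''. strict_prefix pi' pi'' \<and> strict_prefix pi'' pi \<longrightarrow> \<not> binds f X pi''))"

definition regen_clock ::
  "('p, 'l) fml \<Rightarrow> 'o \<Rightarrow> nat list \<Rightarrow> 'o \<Rightarrow> (nat list \<Rightarrow> 'o) \<Rightarrow> (nat list \<Rightarrow> 'o)" where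
  "regen_clock f Gamma th g' c = (\<lambda>t. if t = th then g'
      else if t \<in> Sub_munu f \<and> prefix (th @ [0]) t then Gamma else c t)"

text \<open>Ordinals are modelled by elements of a well-ordered type 'o; the clock
  values are the elements g with g \<le> Gamma.
  Positions without a legal next position are those where the play ends.\<close>
type_synonym ('w, 'o) position = "'w \<times> nat list \<times> (nat list \<Rightarrow> 'o)"

definition game_move ::
  "'w set \<Rightarrow> ('w \<times> 'w) set \<Rightarrow> ('p \<Rightarrow> 'w set) \<Rightarrow> ('p, 'l) fml \<Rightarrow> 'o::wellorder
    \<Rightarrow> ('w, 'o) position \<Rightarrow> ('w, 'o) position \<Rightarrow> bool" where
  "game_move W R V f Gamma p q \<longleftrightarrow>
    (case p of (w, pi, c) \<Rightarrow>
      (\<exists>a b. subat f pi = Some (Or a b) \<and> (q = (w, pi @ [0], c) \<or> q = (w, pi @ [1], c)))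
    \<or> (\<exists>a b. subat f pi = Some (And a b) \<and> (q = (w, pi @ [0], c) \<or> q = (w, pi @ [1], c)))
    \<or> (\<exists>a v. subat f pi = Some (Dia a) \<and> (w, v) \<in> R \<and> q = (v, pi @ [0], c))
    \<or> (\<exists>a v. subat f pi = Some (Box a) \<and> (w, v) \<in> R \<and> q = (v, pi @ [0], c))
    \<or> (\<exists>X a g. subat f pi = Some (Mu X a) \<and> g < Gamma \<and> q = (w, pi @ [0], c(pi := g)))
    \<or> (\<exists>X a g. subat f pi = Some (Nu X a) \<and> g < Gamma \<and> q = (w, pi @ [0], c(pi := g)))
    \<or> (\<exists>th X a g'. is_rf f pi th \<and> subat f th = Some (Mu X a) \<and> g' < c th \<and>
          q = (w, th @ [0], regen_clock f Gamma th g' c))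
    \<or> (\<exists>th X a g'. is_rf f pi th \<and> subat f th = Some (Nu X a) \<and> g' < c th \<and>
          q = (w, th @ [0], regen_clock f Gamma th g' c)))"

definition kripke :: "'w set \<Rightarrow> ('w \<times> 'w) set \<Rightarrow> ('p \<Rightarrow> 'w set) \<Rightarrow> bool" where
  "kripke W R V \<longleftrightarrow> W \<noteq> {} \<and> R \<subseteq> W \<times> W \<and> (\<forall>p. V p \<subseteq> W)"

end

theory Submission
  imports Defs "HOL-Library.Infinite_Set"
begin

lemma subat_bound: "subat f pi = Some g \<Longrightarrow> set pi \<subseteq> {0,1} \<and> length pi \<le> size f"
  by (induction f pi arbitrary: g rule: subat.induct) (auto split: if_splits)

lemma Sub_finite: "finite (Sub f)"
proof -
  have "Sub f \<subseteq> {xs. set xs \<subseteq> {0,1} \<and> length xs \<le> size f}"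
    using subat_bound unfolding Sub_def by fastforce
  moreover have "finite {xs. set xs \<subseteq> {0::nat,1} \<and> length xs \<le> size f}"
    by (rule finite_lists_length_le) simp
  ultimately show ?thesis by (rule finite_subset)
qed

lemma abstract_main:
  fixes T :: "nat list set" and P :: "nat \<Rightarrow> nat list" and C :: "nat \<Rightarrow> nat list \<Rightarrow> 'o::wellorder"
  defines "reg \<equiv> \<lambda>i th. th \<in> T \<and> strict_prefix th (P i) \<and> P (Suc i) = th @ [0] \<and>
      C (Suc i) th < C i th \<and> (\<forall>t. t \<noteq> th \<and> \<not> prefix (th @ [0]) t \<longrightarrow> C (Suc i) t = C i t)"
  assumes fin: "finite T" and bound: "\<And>i. length (P i) \<le> B"
    and step: "\<And>i. (\<exists>k. P (Suc i) = P i @ [k] \<and> (\<forall>t. t \<noteq> P i \<longrightarrow> C (Suc i) t = C i t))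
        \<or> (\<exists>th. reg i th)"
  shows False
proof -
  have inf: "INFM i. \<exists>th\<in>T. reg i th"
  proof (rule ccontr)
    assume "\<not> ?thesis"
    then have "MOST i. \<not> (\<exists>th\<in>T. reg i th)" by (simp add: not_frequently)
    then obtain m where m: "\<And>n. n > m \<Longrightarrow> \<not> (\<exists>th\<in>T. reg n th)" by (auto simp: MOST_nat)
    have ns: "length (P (Suc n)) = Suc (length (P n))" if "n > m" for n
    proof -
      have "\<not> (\<exists>th. reg n th)" using m[OF that] unfolding reg_def by blast
      then show ?thesis using step[of n] by auto
    qed
    have "length (P (Suc m + j)) = length (P (Suc m)) + j" for j
      by (induction j) (auto simp: ns)
    from this[of "Suc B"] bound[of "Suc m + Suc B"] show False by simp
  qed
  then have "\<exists>th\<in>T. INFM i. reg i th" using INFM_finite_Bex_distrib[OF fin, of "\<lambda>th i. reg i th"] by simp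
  then obtain th0 where "th0 \<in> T \<and> (INFM i. reg i th0)" by blast
  then obtain ts where ts: "ts \<in> T \<and> (INFM i. reg i ts)"
    and tsmin: "\<And>th. th \<in> T \<and> (INFM i. reg i th) \<Longrightarrow> length ts \<le> length th"
    using ex_has_least_nat[of "\<lambda>th. th \<in> T \<and> (INFM i. reg i th)" th0 length] by blast
  have "\<forall>th\<in>{th\<in>T. length th < length ts}. MOST i. \<not> reg i th"
  proof
    fix th assume "th \<in> {th\<in>T. length th < length ts}"
    then have "\<not> (INFM i. reg i th)" using tsmin by fastforce
    then show "MOST i. \<not> reg i th" by (simp add: not_frequently)
  qed
  then have "MOST i. \<forall>th\<in>{th\<in>T. length th < length ts}. \<not> reg i th"
    using iffD2[OF MOST_finite_Ball_distrib[of "{th\<in>T. length th < length ts}" "\<lambda>th i. \<not> reg i th"]] fin by simp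
  then obtain N where N: "\<And>n th. n > N \<Longrightarrow> reg n th \<Longrightarrow> length ts \<le> length th"
    unfolding MOST_nat reg_def by force
  from ts obtain t where t: "t > N" "reg t ts" by (auto simp: INFM_nat)
  have inv: "prefix (ts @ [0]) (P (Suc t + j))" for j
  proof (induction j)
    case 0 then show ?case using t unfolding reg_def by simp
  next
    case (Suc j)
    let ?i = "Suc t + j"
    have gt: "?i > N" using t by simp
    from step[of ?i] show ?case
    proof
      assume "\<exists>k. P (Suc ?i) = P ?i @ [k] \<and> (\<forall>t. t \<noteq> P ?i \<longrightarrow> C (Suc ?i) t = C ?i t)"
      then obtain k where "P (Suc ?i) = P ?i @ [k]" by blast
      then have "prefix (P ?i) (P (Suc ?i))" by simp
      with Suc.IH have "prefix (ts @ [0]) (P (Suc ?i))" by (rule prefix_order.trans)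
      then show ?thesis by simp
    next
      assume "\<exists>th. reg ?i th"
      then obtain th where r: "reg ?i th" by blast
      have len: "length ts \<le> length th" using N[OF gt r] .
      have p1: "prefix th (P ?i)" using r unfolding reg_def by (simp add: strict_prefix_def)
      have "prefix (ts @ [0]) (th @ [0])"
      proof (cases "prefix th (ts @ [0])")
        case True
        then have "th = ts @ [0] \<or> prefix th ts" by (simp add: prefix_snoc)
        then have "th = ts @ [0] \<or> th = ts" using len by (auto simp: prefix_def)
        then show ?thesis by auto
      next
        case False
        then have "prefix (ts @ [0]) th" using prefix_same_cases[OF p1 Suc.IH] by blast
        moreover have "prefix th (th @ [0])" by simp
        ultimately show ?thesis by (rule prefix_order.trans)
      qed
      then show ?thesis using r unfolding reg_def by simp
    qed
  qed
  have dec: "C (Suc i) ts \<le> C i ts \<and> (reg i ts \<longrightarrow> C (Suc i) ts < C i ts)" if "i > t" for i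
  proof -
    define j where "j = i - Suc t"
    have ij: "i = Suc t + j" using that by (simp add: j_def)
    have pi: "prefix (ts @ [0]) (P i)" using inv ij by simp
    have gt: "i > N" using that t by simp
    from step[of i] show ?thesis
    proof
      assume "\<exists>k. P (Suc i) = P i @ [k] \<and> (\<forall>t. t \<noteq> P i \<longrightarrow> C (Suc i) t = C i t)"
      moreover have "P i \<noteq> ts"
      proof
        assume "P i = ts"
        with prefix_length_le[OF pi] show False by simp
      qed
      ultimately show ?thesis unfolding reg_def by auto
    next
      assume "\<exists>th. reg i th"
      then obtain th where r: "reg i th" by blast
      have len: "length ts \<le> length th" using N[OF gt r] .
      show ?thesis
      proof (cases "th = ts")
        case True
        then have "C (Suc i) ts < C i ts" using r by (simp add: reg_def)
        then show ?thesis by simp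
      next
        case False
        have "\<not> prefix (th @ [0]) ts"
        proof
          assume "prefix (th @ [0]) ts"
          from prefix_length_le[OF this] len show False by simp
        qed
        then have "C (Suc i) ts = C i ts" using r False unfolding reg_def by auto
        moreover have "\<not> reg i ts" using r False unfolding reg_def by auto
        ultimately show ?thesis by simp
      qed
    qed
  qed
  have mono: "C (i + d) ts \<le> C i ts" if "i > t" for i d
  proof (induction d)
    case 0 then show ?case by simp
  next
    case (Suc d) then show ?case using dec[of "i + d"] that by (auto intro: order.trans)
  qed
  obtain i0 where i0: "i0 > t" "\<And>i. i > t \<Longrightarrow> C i0 ts \<le> C i ts"
  proof -
    let ?m = "LEAST x. \<exists>i>t. x = C i ts"
    have "\<exists>i>t. ?m = C i ts" by (rule LeastI_ex) auto
    then obtain i0 where "i0 > t" "?m = C i0 ts" by blast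
    moreover have "\<And>i. i > t \<Longrightarrow> ?m \<le> C i ts" by (auto intro: Least_le)
    ultimately show ?thesis using that by metis
  qed
  from ts obtain j where j: "j > i0" "reg j ts" by (auto simp: INFM_nat)
  have "C (Suc j) ts < C j ts" using dec[of j] j i0 by simp
  also have "C j ts \<le> C i0 ts" using mono[of i0 "j - i0"] i0 j by simp
  also have "C i0 ts \<le> C (Suc j) ts" using i0 j by simp
  finally show False by simp
qed

theorem proposition1:
  fixes W :: "'w set" and R :: "('w \<times> 'w) set" and V :: "'p \<Rightarrow> 'w set"
    and w0 :: 'w and phi0 :: "('p, 'l) fml" and Gamma :: "'o::wellorder"
  assumes "kripke W R V" and "w0 \<in> W" and "sentence phi0"
  shows "\<not> (\<exists>play :: nat \<Rightarrow> ('w, 'o) position.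
            play 0 = (w0, [], \<lambda>_. Gamma) \<and>
            (\<forall>i. game_move W R V phi0 Gamma (play i) (play (Suc i))))"
proof
  assume "\<exists>play :: nat \<Rightarrow> ('w, 'o) position.
            play 0 = (w0, [], \<lambda>_. Gamma) \<and>
            (\<forall>i. game_move W R V phi0 Gamma (play i) (play (Suc i)))"
  then obtain play :: "nat \<Rightarrow> ('w, 'o) position"
    where mv: "\<And>i. game_move W R V phi0 Gamma (play i) (play (Suc i))" by blast
  define P where "P i = fst (snd (play i))" for i
  define C where "C i = snd (snd (play i))" for i
  have sub: "subat phi0 (P i) \<noteq> None" for i
  proof -
    obtain w pi c where pi: "play i = (w, pi, c)" by (cases "play i") auto
    have "game_move W R V phi0 Gamma (w, pi, c) (play (Suc i))" using mv[of i] pi by simp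
    then have "subat phi0 pi \<noteq> None"
      unfolding game_move_def prod.case is_rf_def by (elim disjE exE conjE) auto
    then show ?thesis using pi by (simp add: P_def)
  qed
  have bound: "length (P i) \<le> size phi0" for i
    using sub[of i] subat_bound by fastforce
  show False
  proof (rule abstract_main[of "Sub phi0" P "size phi0" C])
    show "finite (Sub phi0)" by (rule Sub_finite)
    show "\<And>i. length (P i) \<le> size phi0" by (rule bound)
    fix i
    obtain w pi c where pi: "play i = (w, pi, c)" by (cases "play i") auto
    obtain w' pi' c' where pi': "play (Suc i) = (w', pi', c')" by (cases "play (Suc i)") auto
    have Pi: "P i = pi" "P (Suc i) = pi'" "C i = c" "C (Suc i) = c'"
      using pi pi' by (auto simp: P_def C_def)
    have g: "game_move W R V phi0 Gamma (w, pi, c) (w', pi', c')" using mv[of i] pi pi' by simp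
    have regcase: "\<exists>th. th \<in> Sub phi0 \<and> strict_prefix th pi \<and> pi' = th @ [0] \<and>
      c' th < c th \<and> (\<forall>t. t \<noteq> th \<and> \<not> prefix (th @ [0]) t \<longrightarrow> c' t = c t)"
      if "is_rf phi0 pi th" "subat phi0 th = Some a" "g' < c th"
         "(w', pi', c') = (w, th @ [0], regen_clock phi0 Gamma th g' c)" for th a g'
      using that unfolding is_rf_def regen_clock_def Sub_def by auto
    from g show "(\<exists>k. P (Suc i) = P i @ [k] \<and> (\<forall>t. t \<noteq> P i \<longrightarrow> C (Suc i) t = C i t)) \<or>
       (\<exists>th. th \<in> Sub phi0 \<and> strict_prefix th (P i) \<and> P (Suc i) = th @ [0] \<and>
          C (Suc i) th < C i th \<and> (\<forall>t. t \<noteq> th \<and> \<not> prefix (th @ [0]) t \<longrightarrow> C (Suc i) t = C i t))"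
      unfolding game_move_def Pi
      apply (simp only: prod.case)
      apply (elim disjE exE conjE)
      using regcase by auto
  qed
qed

end
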